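(* Let $N$ be a prime and let $f$ be a function satisfying the standing assumptions in the context. Let $X,Y,Z \subseteq \mathbb{Z}/N\mathbb{Z}$ and $0<\delta_1\le\delta_2$ be such that for each $x\in X$ the number of $y\in Y$ with $-x-y\in Z$ lies between $\delta_1 N$ and $\delta_2 N$, and the same holds with the roles of $X$, $Y$, $Z$ permuted (i.e. for each $y \in Y$ the number of $z\in Z$ with $-y-z\in X$ lies between $\delta_1N$ and $\delta_2N$, and similarly for each element of each set, with any ordering of the other two sets). Then $$|X| \le K \frac{\delta_2}{\delta_1} f(\delta_2^{-1}) N$$ for an absolute constant $K$, and the analogous inequalities hold for $|Y|$ and $|Z|$.
   Context: An additive matching in a finite abelian group $G$ is a collection of triples $(x_i,y_i,z_i)$, $i=1,\dots,m$, of elements of $G$ with $x_i + y_j + z_k = 0$ if and only if $i=j=k$; its size is $m$. Standing assumptions: $f$ is a positive function such that for every $M$, every additive matching in $\mathbb{Z}/M\mathbb{Z}$ has size at most $f(M)M$; $f$ is decreasing, while $Af(A)<Bf(B)$ whenever $A<B$. *)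

theory Defs
  imports "HOL-Number_Theory.Number_Theory"
begin

definition additive_matching ::
  "nat \<Rightarrow> nat \<Rightarrow> (nat \<Rightarrow> int) \<Rightarrow> (nat \<Rightarrow> int) \<Rightarrow> (nat \<Rightarrow> int) \<Rightarrow> bool" where
  "additive_matching M m x y z \<longleftrightarrow>
     (\<forall>i<m. \<forall>j<m. \<forall>k<m. ([x i + y j + z k = 0] (mod int M) \<longleftrightarrow> (i = j \<and> j = k)))"

definition matching_bound_fun :: "(real \<Rightarrow> real) \<Rightarrow> bool" where
  "matching_bound_fun f \<longleftrightarrow>
     (\<forall>x>0. f x > 0) \<and>
     (\<forall>M m x y z. M \<ge> 1 \<longrightarrow> additive_matching M m x y z \<longrightarrow> real m \<le> f (real M) * real M) \<and>
     (\<forall>a b. 0 < a \<longrightarrow> a \<le> b \<longrightarrow> f b \<le> f a) \<and>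
     (\<forall>a b. 0 < a \<longrightarrow> a < b \<longrightarrow> a * f a < b * f b)"

text \<open>Subsets of Z/NZ are represented as sets of integers in {0..<N}.
  For every a in A, the number of b in B with -a-b in C lies in [d1 N, d2 N].\<close>
definition degree_bounds ::
  "nat \<Rightarrow> real \<Rightarrow> real \<Rightarrow> int set \<Rightarrow> int set \<Rightarrow> int set \<Rightarrow> bool" where
  "degree_bounds N d1 d2 A B C \<longleftrightarrow>
     (\<forall>a\<in>A. d1 * real N \<le> real (card {b\<in>B. (- a - b) mod int N \<in> C}) \<and>
             real (card {b\<in>B. (- a - b) mod int N \<in> C}) \<le> d2 * real N)"

end

theory Submission
  imports Defs
begin


definition near :: "int \<times> int \<Rightarrow> int \<times> int \<Rightarrow> bool" where
  "near g g' \<longleftrightarrow> fst g = fst g' \<or> snd g = snd g' \<or> fst g + snd g = fst g' + snd g'"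

definition Iso :: "(int \<times> int) set \<Rightarrow> (int \<times> int) set" where
  "Iso S = {g\<in>S. \<forall>g'\<in>S. near g g' \<longrightarrow> g' = g}"

lemma iso_matching:
  assumes sub: "S \<subseteq> {0..<int L} \<times> {0..<int L}"
    and clo: "\<And>i j i' j' i'' j''. (i,j)\<in>S \<Longrightarrow> (i',j')\<in>S \<Longrightarrow> (i'',j'')\<in>S \<Longrightarrow> i + j' = i''+j'' \<Longrightarrow> (i,j')\<in>S"
  shows "\<exists>x y z. additive_matching (2*L) (card (Iso S)) x y z"
proof -
  have "Iso S \<subseteq> {0..<int L} \<times> {0..<int L}" using sub by (auto simp: Iso_def)
  hence fin: "finite (Iso S)" using finite_subset by blast
  obtain e where e: "bij_betw e {0..<card (Iso S)} (Iso S)" using ex_bij_betw_nat_finite[OF fin] by blast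
  define x where "x t = fst (e t)" for t
  define y where "y t = snd (e t)" for t
  define z where "z t = - (fst (e t) + snd (e t))" for t
  have "additive_matching (2*L) (card (Iso S)) x y z"
    unfolding additive_matching_def
  proof (intro allI impI)
    fix a b c assume ab: "a < card (Iso S)" "b < card (Iso S)" "c < card (Iso S)"
    have ea: "e a \<in> Iso S" and eb: "e b \<in> Iso S" and ec: "e c \<in> Iso S"
      using ab e by (auto intro: bij_betw_apply)
    obtain i1 j1 where a1: "e a = (i1,j1)" by (cases "e a")
    obtain i2 j2 where a2: "e b = (i2,j2)" by (cases "e b")
    obtain i3 j3 where a3: "e c = (i3,j3)" by (cases "e c")
    have S1: "(i1,j1) \<in> S" "(i2,j2) \<in> S" "(i3,j3) \<in> S" using ea eb ec a1 a2 a3 by (auto simp: Iso_def)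
    have R: "0 \<le> i1" "i1 < int L" "0 \<le> j2" "j2 < int L" "0 \<le> i3" "i3 < int L" "0 \<le> j3" "j3 < int L"
      using S1 sub by auto
    have I1: "\<forall>g'\<in>S. near (i1,j1) g' \<longrightarrow> g' = (i1,j1)" using ea a1 by (auto simp: Iso_def)
    have I3: "\<forall>g'\<in>S. near (i3,j3) g' \<longrightarrow> g' = (i3,j3)" using ec a3 by (auto simp: Iso_def)
    have inj: "inj_on e {0..<card (Iso S)}" using e bij_betw_def by blast
    show "[x a + y b + z c = 0] (mod int (2 * L)) \<longleftrightarrow> (a = b \<and> b = c)"
    proof
      assume "[x a + y b + z c = 0] (mod int (2 * L))"
      hence dv0: "int (2*L) dvd i1 + j2 + (- i3 - j3)"
        by (simp add: cong_0_iff x_def y_def z_def a1 a2 a3)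
      have "i1 + j2 + (- i3 - j3) = i1 + j2 - (i3 + j3)" by simp
      hence dv: "int (2*L) dvd i1 + j2 - (i3 + j3)" using dv0 by metis
      have eq: "i1 + j2 = i3 + j3"
      proof (rule ccontr)
        assume "i1 + j2 \<noteq> i3 + j3"
        hence "i1 + j2 - (i3 + j3) \<noteq> 0" by simp
        hence "\<bar>int (2*L)\<bar> \<le> \<bar>i1 + j2 - (i3 + j3)\<bar>" using dvd_imp_le_int dv by blast
        moreover have "\<bar>i1 + j2 - (i3 + j3)\<bar> < int (2*L)" using R by linarith
        ultimately show False by linarith
      qed
      have m: "(i1,j2) \<in> S" using clo[OF S1(1) S1(2) S1(3) eq] .
      have "(i1,j2) = (i1,j1)" using I1 m by (auto simp: near_def)
      hence j: "j2 = j1" by simp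
      have "(i2,j2) = (i1,j1)" using I1 S1(2) j by (auto simp: near_def)
      hence "e b = e a" using a1 a2 by simp
      hence "b = a" using inj ab by (auto dest: inj_onD)
      moreover have "(i1,j2) = (i3,j3)" using I3 m eq by (auto simp: near_def)
      hence "e c = e a" using a1 a3 j by simp
      hence "c = a" using inj ab by (auto dest: inj_onD)
      ultimately show "a = b \<and> b = c" by simp
    next
      assume "a = b \<and> b = c"
      thus "[x a + y b + z c = 0] (mod int (2 * L))" by (simp add: x_def y_def z_def)
    qed
  qed
  thus ?thesis by blast
qed



definition al :: "int \<Rightarrow> int \<Rightarrow> int \<Rightarrow> int \<Rightarrow> int" where
  "al n l s i = (s + l*i) mod n"
definition ga :: "int \<Rightarrow> int \<Rightarrow> int \<Rightarrow> int \<Rightarrow> int \<Rightarrow> int" where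
  "ga n l s t k = (- s - t - l*k) mod n"

definition Gs :: "int \<Rightarrow> int set \<Rightarrow> int set \<Rightarrow> int set \<Rightarrow> nat \<Rightarrow> int \<times> int \<times> int \<Rightarrow> (int \<times> int) set" where
  "Gs n A B C L p = {(i,j). 0 \<le> i \<and> i < int L \<and> 0 \<le> j \<and> j < int L \<and>
      al n (fst p) (fst (snd p)) i \<in> A \<and> al n (fst p) (snd (snd p)) j \<in> B \<and>
      ga n (fst p) (fst (snd p)) (snd (snd p)) (i+j) \<in> C}"

lemma dvd_mod_diff: "(n::int) dvd x - x mod n"
  by (simp add: minus_mod_eq_mult_div)

lemma id0: "al n l ((a - l*i) mod n) i = a mod n"
proof -
  have "n dvd - ((a - l*i) - (a - l*i) mod n)" using dvd_mod_diff by (simp only: dvd_minus_iff)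
  moreover have "- ((a - l*i) - (a - l*i) mod n) = ((a - l*i) mod n + l*i) - a" by simp
  ultimately show ?thesis unfolding al_def by (simp only: mod_eq_dvd_iff)
qed

lemma id0g: "ga n l ((a - l*i) mod n) ((b - l*j) mod n) (i+j) = (- a - b) mod n"
proof -
  have "n dvd ((a - l*i) - (a - l*i) mod n) + ((b - l*j) - (b - l*j) mod n)"
    by (intro dvd_add dvd_mod_diff)
  moreover have "((a - l*i) - (a - l*i) mod n) + ((b - l*j) - (b - l*j) mod n)
     = (- ((a - l*i) mod n) - (b - l*j) mod n - l*(i+j)) - (- a - b)" by (simp add: algebra_simps)
  ultimately show ?thesis unfolding ga_def by (simp only: mod_eq_dvd_iff)
qed

lemma id1: "(- al n l s i - al n l t j) mod n = ga n l s t (i+j)"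
proof -
  have "n dvd ((s + l*i) - (s + l*i) mod n) + ((t + l*j) - (t + l*j) mod n)"
    by (intro dvd_add dvd_mod_diff)
  moreover have "((s + l*i) - (s + l*i) mod n) + ((t + l*j) - (t + l*j) mod n)
     = (- ((s + l*i) mod n) - (t + l*j) mod n) - (- s - t - l*(i+j))" by (simp add: algebra_simps)
  ultimately show ?thesis unfolding ga_def al_def by (simp only: mod_eq_dvd_iff)
qed

lemma id1': "(- al n l t j - al n l s i) mod n = ga n l s t (i+j)"
proof -
  have "- al n l t j - al n l s i = - al n l s i - al n l t j" by simp
  thus ?thesis using id1 by metis
qed

lemma id2: "(- ga n l s t k - al n l s i) mod n = al n l t (k - i)"
proof -
  have "n dvd ((- s - t - l*k) - (- s - t - l*k) mod n) + ((s + l*i) - (s + l*i) mod n)"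
    by (intro dvd_add dvd_mod_diff)
  moreover have "((- s - t - l*k) - (- s - t - l*k) mod n) + ((s + l*i) - (s + l*i) mod n)
     = (- ((- s - t - l*k) mod n) - (s + l*i) mod n) - (t + l*(k - i))" by (simp add: algebra_simps)
  ultimately show ?thesis unfolding ga_def al_def by (simp only: mod_eq_dvd_iff)
qed

lemma id3: "(c::int) mod n = c \<Longrightarrow> (- a - (- c - a) mod n) mod n = c"
proof -
  assume c: "c mod n = c"
  have "n dvd ((- c - a) - (- c - a) mod n)" using dvd_mod_diff by simp
  moreover have "((- c - a) - (- c - a) mod n) = (- a - (- c - a) mod n) - c" by simp
  ultimately have "(- a - (- c - a) mod n) mod n = c mod n" by (simp only: mod_eq_dvd_iff)
  thus ?thesis using c by simp
qed

lemma uniq_dvd: "0 \<le> (u::int) \<Longrightarrow> u < n \<Longrightarrow> 0 \<le> v \<Longrightarrow> v < n \<Longrightarrow> n dvd u - v \<Longrightarrow> u = v"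
  by (metis mod_eq_dvd_iff mod_pos_pos_trivial)

lemma lam_unique:
  assumes pr: "prime (n::int)" and l: "1 \<le> l" "l < n" and l': "1 \<le> l'" "l' < n"
    and t: "0 \<le> t" "t < n" and t': "0 \<le> t'" "t' < n"
    and k: "0 \<le> k" "k < n" "0 \<le> k'" "k' < n" "k \<noteq> k'"
    and e1: "al n l t k = al n l' t' k" and e2: "al n l t k' = al n l' t' k'"
  shows "l = l' \<and> t = t'"
proof -
  have d1: "n dvd (t + l*k) - (t' + l'*k)" using e1 unfolding al_def by (simp only: mod_eq_dvd_iff)
  have d2: "n dvd (t + l*k') - (t' + l'*k')" using e2 unfolding al_def by (simp only: mod_eq_dvd_iff)
  have "n dvd ((t + l*k) - (t' + l'*k)) - ((t + l*k') - (t' + l'*k'))" using d1 d2 by (rule dvd_diff)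
  moreover have "((t + l*k) - (t' + l'*k)) - ((t + l*k') - (t' + l'*k')) = (l - l') * (k - k')"
    by (simp add: algebra_simps)
  ultimately have "n dvd (l - l') * (k - k')" by simp
  hence "n dvd (l - l') \<or> n dvd (k - k')" using pr prime_dvd_mult_iff by blast
  moreover have "\<not> n dvd (k - k')"
  proof
    assume "n dvd (k - k')"
    hence "\<bar>n\<bar> \<le> \<bar>k - k'\<bar>" using dvd_imp_le_int k(5) by simp
    thus False using k by linarith
  qed
  ultimately have "n dvd l - l'" by blast
  hence ll: "l = l'" using uniq_dvd[of l n l'] l l' by simp
  have "n dvd t - t'" using d1 unfolding ll by (simp add: algebra_simps)
  hence "t = t'" using uniq_dvd t t' by blast
  thus ?thesis using ll by simp
qed

lemma avg_exists:
  fixes g :: "'a \<Rightarrow> real"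
  assumes "finite P" "P \<noteq> {}"
  shows "\<exists>p\<in>P. (\<Sum>q\<in>P. g q) \<le> real (card P) * g p"
proof (rule ccontr)
  assume "\<not> ?thesis"
  hence h: "\<forall>p\<in>P. real (card P) * g p < (\<Sum>q\<in>P. g q)" by auto
  have "(\<Sum>p\<in>P. real (card P) * g p) < (\<Sum>p\<in>P. (\<Sum>q\<in>P. g q))"
    using h by (intro sum_strict_mono[OF assms]) auto
  moreover have "(\<Sum>p\<in>P. real (card P) * g p) = real (card P) * (\<Sum>q\<in>P. g q)"
    by (rule sum_distrib_left[symmetric])
  moreover have "(\<Sum>p\<in>P. (\<Sum>q\<in>P. g q)) = real (card P) * (\<Sum>q\<in>P. g q)" by simp
  ultimately show False by linarith
qed



lemma al_cancel: "0 \<le> s \<Longrightarrow> s < n \<Longrightarrow> 0 \<le> s' \<Longrightarrow> s' < n \<Longrightarrow> al n l s i = al n l s' i \<Longrightarrow> s = s'"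
proof -
  assume a: "0 \<le> s" "s < n" "0 \<le> s'" "s' < n" "al n l s i = al n l s' i"
  hence "n dvd (s + l*i) - (s' + l*i)" unfolding al_def by (simp only: mod_eq_dvd_iff)
  hence "n dvd s - s'" by simp
  thus ?thesis using uniq_dvd a by blast
qed

lemma ga_cancel: "0 \<le> t \<Longrightarrow> t < n \<Longrightarrow> 0 \<le> t' \<Longrightarrow> t' < n \<Longrightarrow> ga n l s t k = ga n l s t' k \<Longrightarrow> t = t'"
proof -
  assume a: "0 \<le> t" "t < n" "0 \<le> t'" "t' < n" "ga n l s t k = ga n l s t' k"
  hence "n dvd (- s - t - l*k) - (- s - t' - l*k)" unfolding ga_def by (simp only: mod_eq_dvd_iff)
  hence "n dvd t' - t" by simp
  thus ?thesis using uniq_dvd a by (metis)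
qed


lemma counting:
  fixes n :: int and L :: nat and dd :: real
  assumes pr: "prime n" and sA: "A \<subseteq> {0..<n}" and sB: "B \<subseteq> {0..<n}" and sC: "C \<subseteq> {0..<n}"
    and LN: "int L < n" and dd0: "0 \<le> dd"
    and dA: "\<forall>a\<in>A. real (card {b\<in>B. (- a - b) mod n \<in> C}) \<le> dd"
    and dB: "\<forall>b\<in>B. real (card {a\<in>A. (- b - a) mod n \<in> C}) \<le> dd"
    and dC: "\<forall>c\<in>C. real (card {a\<in>A. (- c - a) mod n \<in> B}) \<le> dd"
    and small: "6 * real L * dd \<le> real_of_int n - 1"
  shows "\<exists>p. real L ^ 2 * real (card (SIGMA a:A. {b\<in>B. (- a - b) mod n \<in> C}))
            \<le> 2 * (real_of_int n)^2 * real (card (Iso (Gs n A B C L p)))"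
proof -
  define Ba where "Ba a = {b\<in>B. (- a - b) mod n \<in> C}" for a
  define Ab where "Ab b = {a\<in>A. (- b - a) mod n \<in> C}" for b
  define Ac where "Ac c = {a\<in>A. (- c - a) mod n \<in> B}" for c
  define T where "T = Sigma A Ba"
  define R where "R = {0..<int L}"
  define P where "P = {1..<n} \<times> {0..<n} \<times> {0..<n}"
  define G where "G = Gs n A B C L"
  define C1 where "C1 p = {(g,g'). g \<in> G p \<and> g' \<in> G p \<and> fst g = fst g' \<and> snd g \<noteq> snd g'}" for p
  define C2 where "C2 p = {(g,g'). g \<in> G p \<and> g' \<in> G p \<and> snd g = snd g' \<and> fst g \<noteq> fst g'}" for p
  define C3 where "C3 p = {(g,g'). g \<in> G p \<and> g' \<in> G p \<and> fst g + snd g = fst g' + snd g' \<and> fst g \<noteq> fst g'}" for p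
  have n2: "2 \<le> n" using pr prime_ge_2_int by blast
  have finA: "finite A" using sA finite_subset by blast
  have finB: "finite B" using sB finite_subset by blast
  have finC: "finite C" using sC finite_subset by blast
  have finR: "finite R" unfolding R_def by simp
  have cardR: "card R = L" unfolding R_def by simp
  have finP: "finite P" unfolding P_def by simp
  have GR: "G p \<subseteq> R \<times> R" for p unfolding G_def Gs_def R_def by auto
  have finG: "finite (G p)" for p using GR finR finite_subset by blast
  have finGG: "finite (G p \<times> G p)" for p using finG by simp
  have "C1 p \<subseteq> G p \<times> G p" "C2 p \<subseteq> G p \<times> G p" "C3 p \<subseteq> G p \<times> G p" for p
    unfolding C1_def C2_def C3_def by auto
  hence finCk: "finite (C1 p)" "finite (C2 p)" "finite (C3 p)" for p
    using finGG finite_subset by metis+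
  have finI: "finite (Iso (G p))" for p using finG[of p] by (rule finite_subset[rotated]) (auto simp: Iso_def)
  have finT: "finite T" unfolding T_def Ba_def using finA finB by simp
  have Gmem: "(i,j) \<in> G (l,s,t) \<longleftrightarrow> 0 \<le> i \<and> i < int L \<and> 0 \<le> j \<and> j < int L \<and>
      al n l s i \<in> A \<and> al n l t j \<in> B \<and> ga n l s t (i+j) \<in> C" for i j l s t
    unfolding G_def Gs_def by simp
  have Pmem: "(l,s,t) \<in> P \<longleftrightarrow> 1 \<le> l \<and> l < n \<and> 0 \<le> s \<and> s < n \<and> 0 \<le> t \<and> t < n" for l s t
    unfolding P_def by auto
  have stepa: "card (G p) \<le> card (Iso (G p)) + card (C1 p) + card (C2 p) + card (C3 p)" for p
  proof -
    have "G p \<subseteq> Iso (G p) \<union> fst ` (C1 p \<union> C2 p \<union> C3 p)"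
    proof
      fix g assume g: "g \<in> G p"
      show "g \<in> Iso (G p) \<union> fst ` (C1 p \<union> C2 p \<union> C3 p)"
      proof (cases "g \<in> Iso (G p)")
        case True thus ?thesis by simp
      next
        case False
        then obtain g' where g': "g' \<in> G p" "near g g'" "g' \<noteq> g" using g unfolding Iso_def by auto
        have "(g,g') \<in> C1 p \<union> C2 p \<union> C3 p"
          using g g' unfolding C1_def C2_def C3_def near_def by (auto simp: prod_eq_iff)
        thus ?thesis by force
      qed
    qed
    hence "card (G p) \<le> card (Iso (G p) \<union> fst ` (C1 p \<union> C2 p \<union> C3 p))"
      by (intro card_mono) (use finG finCk finI in auto)
    also have "\<dots> \<le> card (Iso (G p)) + card (fst ` (C1 p \<union> C2 p \<union> C3 p))" by (rule card_Un_le)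
    also have "card (fst ` (C1 p \<union> C2 p \<union> C3 p)) \<le> card (C1 p \<union> C2 p \<union> C3 p)" by (rule card_image_le) (use finCk in auto)
    also have "card (C1 p \<union> C2 p \<union> C3 p) \<le> card (C1 p \<union> C2 p) + card (C3 p)" by (rule card_Un_le)
    also have "card (C1 p \<union> C2 p) \<le> card (C1 p) + card (C2 p)" by (rule card_Un_le)
    finally show ?thesis by linarith
  qed
  define Q0 where "Q0 = {1..<n} \<times> (R \<times> R) \<times> T"
  define h0 where "h0 = (\<lambda>(l::int,(i::int,j::int),(a::int,b::int)). ((l, (a - l*i) mod n, (b - l*j) mod n), (i,j)))"
  have inj0: "inj_on h0 Q0"
  proof (rule inj_onI)
    fix x y assume x: "x \<in> Q0" and y: "y \<in> Q0" and e: "h0 x = h0 y"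
    obtain l i j a b where xx: "x = (l,(i,j),(a,b))" by (metis prod.exhaust)
    obtain l' i' j' a' b' where yy: "y = (l',(i',j'),(a',b'))" by (metis prod.exhaust)
    have e': "l = l'" "i = i'" "j = j'" "(a - l*i) mod n = (a' - l*i) mod n" "(b - l*j) mod n = (b' - l*j) mod n"
      using e unfolding xx yy h0_def by auto
    have r: "a \<in> A" "b \<in> B" "a' \<in> A" "b' \<in> B" using x y unfolding xx yy Q0_def T_def Ba_def by auto
    have "n dvd (a - l*i) - (a' - l*i)" using e'(4) by (simp only: mod_eq_dvd_iff)
    hence "n dvd a - a'" by simp
    hence "a = a'" using uniq_dvd r sA by (meson atLeastLessThan_iff subsetD)
    moreover have "n dvd (b - l*j) - (b' - l*j)" using e'(5) by (simp only: mod_eq_dvd_iff)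
    hence "n dvd b - b'" by simp
    hence "b = b'" using uniq_dvd r sB by (meson atLeastLessThan_iff subsetD)
    ultimately show "x = y" using xx yy e' by simp
  qed
  have img0: "h0 ` Q0 \<subseteq> Sigma P G"
  proof
    fix w assume "w \<in> h0 ` Q0"
    then obtain x where x: "x \<in> Q0" and w: "w = h0 x" by blast
    obtain l i j a b where xx: "x = (l,(i,j),(a,b))" by (metis prod.exhaust)
    have r: "1 \<le> l" "l < n" "i \<in> R" "j \<in> R" "a \<in> A" "b \<in> B" "(- a - b) mod n \<in> C"
      using x unfolding xx Q0_def T_def Ba_def by auto
    have a0: "a mod n = a" "b mod n = b" using r(5,6) sA sB by auto
    have "(i,j) \<in> G (l, (a - l*i) mod n, (b - l*j) mod n)"
      unfolding Gmem using r id0[of n l a i] id0[of n l b j] id0g[of n l a i b j] a0 by (auto simp: R_def)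
    moreover have "(l, (a - l*i) mod n, (b - l*j) mod n) \<in> P" unfolding Pmem using r n2 by auto
    ultimately show "w \<in> Sigma P G" unfolding w xx h0_def by simp
  qed
  have finSPG: "finite (Sigma P G)" using finP finG by simp
  have "card Q0 \<le> card (Sigma P G)" using card_inj_on_le[OF inj0 img0 finSPG] .
  moreover have "card Q0 = nat (n - 1) * (L * L * card T)" unfolding Q0_def by (simp add: card_cartesian_product cardR)
  moreover have "card (Sigma P G) = (\<Sum>p\<in>P. card (G p))" using finP finG by (simp add: card_SigmaI)
  ultimately have "real (nat (n - 1) * (L * L * card T)) \<le> real (\<Sum>p\<in>P. card (G p))"
    by (metis of_nat_le_iff)
  moreover have "real (nat (n - 1)) = real_of_int (n - 1)" using n2 by simp
  ultimately have SGlow: "real_of_int (n - 1) * (real L * real L * real (card T)) \<le> (\<Sum>p\<in>P. real (card (G p)))"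
    by (simp add: of_nat_sum)

  have Pb: "1 \<le> l \<and> l < n \<and> 0 \<le> s \<and> s < n \<and> 0 \<le> t \<and> t < n" if "(l,s,t) \<in> P" for l s t
    using that Pmem by blast
  define Q1 where "Q1 = (R \<times> R \<times> R) \<times> Sigma A (\<lambda>a. Ba a \<times> Ba a)"
  define h1 where "h1 = (\<lambda>((l::int,s::int,t::int),((i::int,j::int),(i'::int,j'::int))). ((i,j,j'), (al n l s i, (al n l t j, al n l t j'))))"
  have inj1: "inj_on h1 (Sigma P C1)"
  proof (rule inj_onI)
    fix x y assume x: "x \<in> Sigma P C1" and y: "y \<in> Sigma P C1" and e: "h1 x = h1 y"
    obtain l s t i j i' j' where xx: "x = ((l,s,t),((i,j),(i',j')))" by (metis prod.exhaust)
    obtain l2 s2 t2 i2 j2 i2' j2' where yy: "y = ((l2,s2,t2),((i2,j2),(i2',j2')))" by (metis prod.exhaust)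
    have ex: "(l,s,t) \<in> P" "(i,j) \<in> G (l,s,t)" "(i',j') \<in> G (l,s,t)" "i = i'" "j \<noteq> j'"
      using x unfolding xx C1_def by auto
    have ey: "(l2,s2,t2) \<in> P" "(i2,j2) \<in> G (l2,s2,t2)" "(i2',j2') \<in> G (l2,s2,t2)" "i2 = i2'"
      using y unfolding yy C1_def by auto
    have e': "i = i2" "j = j2" "j' = j2'" "al n l s i = al n l2 s2 i" "al n l t j = al n l2 t2 j" "al n l t j' = al n l2 t2 j'"
      using e unfolding xx yy h1_def by auto
    have b1: "1 \<le> l" "l < n" "0 \<le> s" "s < n" "0 \<le> t" "t < n" using Pb[OF ex(1)] by auto
    have b2: "1 \<le> l2" "l2 < n" "0 \<le> s2" "s2 < n" "0 \<le> t2" "t2 < n" using Pb[OF ey(1)] by auto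
    have bj: "0 \<le> j" "j < n" "0 \<le> j'" "j' < n" using ex(2,3) LN unfolding Gmem by auto
    have lt: "l = l2 \<and> t = t2"
      by (rule lam_unique[OF pr b1(1,2) b2(1,2) b1(5,6) b2(5,6) bj ex(5) e'(5,6)])
    have "s = s2" using al_cancel[of s n s2 l i] b1 b2 e'(4) lt by simp
    thus "x = y" using xx yy e' ex ey lt by simp
  qed
  have img1: "h1 ` Sigma P C1 \<subseteq> Q1"
  proof
    fix w assume "w \<in> h1 ` Sigma P C1"
    then obtain x where x: "x \<in> Sigma P C1" and w: "w = h1 x" by blast
    obtain l s t i j i' j' where xx: "x = ((l,s,t),((i,j),(i',j')))" by (metis prod.exhaust)
    have ex: "(i,j) \<in> G (l,s,t)" "(i',j') \<in> G (l,s,t)" "i = i'"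
      using x unfolding xx C1_def by auto
    show "w \<in> Q1" unfolding w xx h1_def Q1_def Ba_def R_def
      using ex id1[of n l s i t j] id1[of n l s i t j'] unfolding Gmem by auto
  qed
  define Q2 where "Q2 = (R \<times> R \<times> R) \<times> Sigma B (\<lambda>b. Ab b \<times> Ab b)"
  define h2 where "h2 = (\<lambda>((l::int,s::int,t::int),((i::int,j::int),(i'::int,j'::int))). ((j,i,i'), (al n l t j, (al n l s i, al n l s i'))))"
  have inj2: "inj_on h2 (Sigma P C2)"
  proof (rule inj_onI)
    fix x y assume x: "x \<in> Sigma P C2" and y: "y \<in> Sigma P C2" and e: "h2 x = h2 y"
    obtain l s t i j i' j' where xx: "x = ((l,s,t),((i,j),(i',j')))" by (metis prod.exhaust)
    obtain l2 s2 t2 i2 j2 i2' j2' where yy: "y = ((l2,s2,t2),((i2,j2),(i2',j2')))" by (metis prod.exhaust)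
    have ex: "(l,s,t) \<in> P" "(i,j) \<in> G (l,s,t)" "(i',j') \<in> G (l,s,t)" "j = j'" "i \<noteq> i'"
      using x unfolding xx C2_def by auto
    have ey: "(l2,s2,t2) \<in> P" "(i2,j2) \<in> G (l2,s2,t2)" "(i2',j2') \<in> G (l2,s2,t2)" "j2 = j2'"
      using y unfolding yy C2_def by auto
    have e': "j = j2" "i = i2" "i' = i2'" "al n l t j = al n l2 t2 j" "al n l s i = al n l2 s2 i" "al n l s i' = al n l2 s2 i'"
      using e unfolding xx yy h2_def by auto
    have b1: "1 \<le> l" "l < n" "0 \<le> s" "s < n" "0 \<le> t" "t < n" using Pb[OF ex(1)] by auto
    have b2: "1 \<le> l2" "l2 < n" "0 \<le> s2" "s2 < n" "0 \<le> t2" "t2 < n" using Pb[OF ey(1)] by auto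
    have bj: "0 \<le> i" "i < n" "0 \<le> i'" "i' < n" using ex(2,3) LN unfolding Gmem by auto
    have lt: "l = l2 \<and> s = s2"
      by (rule lam_unique[OF pr b1(1,2) b2(1,2) b1(3,4) b2(3,4) bj ex(5) e'(5,6)])
    have "t = t2" using al_cancel[of t n t2 l j] b1 b2 e'(4) lt by simp
    thus "x = y" using xx yy e' ex ey lt by simp
  qed
  have img2: "h2 ` Sigma P C2 \<subseteq> Q2"
  proof
    fix w assume "w \<in> h2 ` Sigma P C2"
    then obtain x where x: "x \<in> Sigma P C2" and w: "w = h2 x" by blast
    obtain l s t i j i' j' where xx: "x = ((l,s,t),((i,j),(i',j')))" by (metis prod.exhaust)
    have ex: "(i,j) \<in> G (l,s,t)" "(i',j') \<in> G (l,s,t)" "j = j'"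
      using x unfolding xx C2_def by auto
    show "w \<in> Q2" unfolding w xx h2_def Q2_def Ab_def R_def
      using ex id1'[of n l t j s i] id1'[of n l t j s i'] unfolding Gmem by auto
  qed
  define Q3 where "Q3 = (R \<times> R \<times> R) \<times> Sigma C (\<lambda>c. Ac c \<times> Ac c)"
  define h3 where "h3 = (\<lambda>((l::int,s::int,t::int),((i::int,j::int),(i'::int,j'::int))). ((i,j,i'), (ga n l s t (i+j), (al n l s i, al n l s i'))))"
  have inj3: "inj_on h3 (Sigma P C3)"
  proof (rule inj_onI)
    fix x y assume x: "x \<in> Sigma P C3" and y: "y \<in> Sigma P C3" and e: "h3 x = h3 y"
    obtain l s t i j i' j' where xx: "x = ((l,s,t),((i,j),(i',j')))" by (metis prod.exhaust)
    obtain l2 s2 t2 i2 j2 i2' j2' where yy: "y = ((l2,s2,t2),((i2,j2),(i2',j2')))" by (metis prod.exhaust)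
    have ex: "(l,s,t) \<in> P" "(i,j) \<in> G (l,s,t)" "(i',j') \<in> G (l,s,t)" "i + j = i' + j'" "i \<noteq> i'"
      using x unfolding xx C3_def by auto
    have ey: "(l2,s2,t2) \<in> P" "(i2,j2) \<in> G (l2,s2,t2)" "(i2',j2') \<in> G (l2,s2,t2)" "i2 + j2 = i2' + j2'"
      using y unfolding yy C3_def by auto
    have e': "i = i2" "j = j2" "i' = i2'" "ga n l s t (i+j) = ga n l2 s2 t2 (i+j)" "al n l s i = al n l2 s2 i" "al n l s i' = al n l2 s2 i'"
      using e unfolding xx yy h3_def by auto
    have b1: "1 \<le> l" "l < n" "0 \<le> s" "s < n" "0 \<le> t" "t < n" using Pb[OF ex(1)] by auto
    have b2: "1 \<le> l2" "l2 < n" "0 \<le> s2" "s2 < n" "0 \<le> t2" "t2 < n" using Pb[OF ey(1)] by auto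
    have bj: "0 \<le> i" "i < n" "0 \<le> i'" "i' < n" using ex(2,3) LN unfolding Gmem by auto
    have lt: "l = l2 \<and> s = s2"
      by (rule lam_unique[OF pr b1(1,2) b2(1,2) b1(3,4) b2(3,4) bj ex(5) e'(5,6)])
    have "t = t2" using ga_cancel[of t n t2 l s "i+j"] b1 b2 e'(4) lt by simp
    moreover have "j' = j2'" using ex(4) ey(4) e' by simp
    ultimately show "x = y" using xx yy e' lt by simp
  qed
  have img3: "h3 ` Sigma P C3 \<subseteq> Q3"
  proof
    fix w assume "w \<in> h3 ` Sigma P C3"
    then obtain x where x: "x \<in> Sigma P C3" and w: "w = h3 x" by blast
    obtain l s t i j i' j' where xx: "x = ((l,s,t),((i,j),(i',j')))" by (metis prod.exhaust)
    have ex: "(i,j) \<in> G (l,s,t)" "(i',j') \<in> G (l,s,t)" "i + j = i' + j'"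
      using x unfolding xx C3_def by auto
    have jj: "i + j - i = j" "i + j - i' = j'" using ex(3) by auto
    show "w \<in> Q3" unfolding w xx h3_def Q3_def Ac_def R_def
      using ex id2[of n l s t "i+j" i] id2[of n l s t "i+j" i'] unfolding Gmem jj by auto
  qed
  have finBa: "finite (Ba a)" for a unfolding Ba_def using finB by simp
  have finAb: "finite (Ab b)" for b unfolding Ab_def using finA by simp
  have finAc: "finite (Ac c)" for c unfolding Ac_def using finA by simp
  have finQ1: "finite Q1" unfolding Q1_def using finR finA finBa by simp
  have finQ2: "finite Q2" unfolding Q2_def using finR finB finAb by simp
  have finQ3: "finite Q3" unfolding Q3_def using finR finC finAc by simp
  have cT: "card T = (\<Sum>a\<in>A. card (Ba a))" unfolding T_def using finA finBa by (simp add: card_SigmaI)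
  have sqbound: "(\<Sum>x\<in>X. real (card (F x)) * real (card (F x))) \<le> dd * (\<Sum>x\<in>X. real (card (F x)))"
    if "\<forall>x\<in>X. real (card (F x)) \<le> dd" for X and F :: "int \<Rightarrow> int set"
  proof -
    have "(\<Sum>x\<in>X. real (card (F x)) * real (card (F x))) \<le> (\<Sum>x\<in>X. dd * real (card (F x)))"
      using that by (intro sum_mono mult_right_mono) auto
    thus ?thesis by (simp add: sum_distrib_left)
  qed
  have cQ: "real (card ((R \<times> R \<times> R) \<times> Sigma X (\<lambda>x. F x \<times> F x))) = real L ^ 3 * (\<Sum>x\<in>X. real (card (F x)) * real (card (F x)))"
    if "finite X" "\<forall>x. finite (F x)" for X and F :: "int \<Rightarrow> int set"
    using that by (simp add: card_cartesian_product card_SigmaI cardR power3_eq_cube of_nat_sum)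
  have swapT: "card (Sigma B Ab) \<le> card T"
  proof (rule card_inj_on_le[of "\<lambda>(b,a). (a,b)"])
    show "inj_on (\<lambda>(b,a). (a,b)) (Sigma B Ab)" by (auto simp: inj_on_def)
    show "(\<lambda>(b,a). (a,b)) ` Sigma B Ab \<subseteq> T" unfolding T_def Ab_def Ba_def
    proof clarsimp
      fix b a assume h: "(- b - a) mod n \<in> C"
      have e: "- a - b = - b - a" by simp
      show "(- a - b) mod n \<in> C" using h e by metis
    qed
    show "finite T" by (rule finT)
  qed
  have swapC: "card (Sigma C Ac) \<le> card T"
  proof (rule card_inj_on_le[of "\<lambda>(c,a). (a, (- c - a) mod n)"])
    show "inj_on (\<lambda>(c,a). (a, (- c - a) mod n)) (Sigma C Ac)"
    proof (rule inj_onI, clarsimp)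
      fix c a c' assume c: "c \<in> C" "c' \<in> C" and e: "(- c - a) mod n = (- c' - a) mod n"
      have "n dvd (- c - a) - (- c' - a)" using e by (simp only: mod_eq_dvd_iff)
      hence "n dvd c' - c" by simp
      thus "c = c'" using uniq_dvd c sC by (metis atLeastLessThan_iff subsetD)
    qed
    show "(\<lambda>(c,a). (a, (- c - a) mod n)) ` Sigma C Ac \<subseteq> T"
    proof clarsimp
      fix c a assume c: "c \<in> C" and a: "a \<in> Ac c"
      have cm: "c mod n = c" using c sC by auto
      show "(a, (- c - a) mod n) \<in> T" using a c id3[OF cm, of a] unfolding T_def Ba_def Ac_def by auto
    qed
    show "finite T" by (rule finT)
  qed
  have S1: "(\<Sum>p\<in>P. real (card (C1 p))) \<le> real L ^ 3 * (dd * real (card T))"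
  proof -
    have "(\<Sum>p\<in>P. real (card (C1 p))) = real (card (Sigma P C1))"
      using finP finCk by (simp add: card_SigmaI of_nat_sum)
    also have "\<dots> \<le> real (card Q1)" using card_inj_on_le[OF inj1 img1 finQ1] by simp
    also have "\<dots> = real L ^ 3 * (\<Sum>a\<in>A. real (card (Ba a)) * real (card (Ba a)))"
      unfolding Q1_def using cQ finA finBa by blast
    also have "\<dots> \<le> real L ^ 3 * (dd * (\<Sum>a\<in>A. real (card (Ba a))))"
      using sqbound[of A Ba] dA unfolding Ba_def by (intro mult_left_mono) auto
    finally show ?thesis using cT by (simp add: of_nat_sum)
  qed
  have S2: "(\<Sum>p\<in>P. real (card (C2 p))) \<le> real L ^ 3 * (dd * real (card T))"
  proof -
    have "(\<Sum>p\<in>P. real (card (C2 p))) = real (card (Sigma P C2))"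
      using finP finCk by (simp add: card_SigmaI of_nat_sum)
    also have "\<dots> \<le> real (card Q2)" using card_inj_on_le[OF inj2 img2 finQ2] by simp
    also have "\<dots> = real L ^ 3 * (\<Sum>b\<in>B. real (card (Ab b)) * real (card (Ab b)))"
      unfolding Q2_def using cQ finB finAb by blast
    also have "\<dots> \<le> real L ^ 3 * (dd * (\<Sum>b\<in>B. real (card (Ab b))))"
      using sqbound[of B Ab] dB unfolding Ab_def by (intro mult_left_mono) auto
    also have "(\<Sum>b\<in>B. real (card (Ab b))) = real (card (Sigma B Ab))"
      using finB finAb by (simp add: card_SigmaI of_nat_sum)
    also have "\<dots> \<le> real (card T)" using swapT by simp
    finally show ?thesis using dd0 by (simp add: mult_left_mono)
  qed
  have S3: "(\<Sum>p\<in>P. real (card (C3 p))) \<le> real L ^ 3 * (dd * real (card T))"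
  proof -
    have "(\<Sum>p\<in>P. real (card (C3 p))) = real (card (Sigma P C3))"
      using finP finCk by (simp add: card_SigmaI of_nat_sum)
    also have "\<dots> \<le> real (card Q3)" using card_inj_on_le[OF inj3 img3 finQ3] by simp
    also have "\<dots> = real L ^ 3 * (\<Sum>c\<in>C. real (card (Ac c)) * real (card (Ac c)))"
      unfolding Q3_def using cQ finC finAc by blast
    also have "\<dots> \<le> real L ^ 3 * (dd * (\<Sum>c\<in>C. real (card (Ac c))))"
      using sqbound[of C Ac] dC unfolding Ac_def by (intro mult_left_mono) auto
    also have "(\<Sum>c\<in>C. real (card (Ac c))) = real (card (Sigma C Ac))"
      using finC finAc by (simp add: card_SigmaI of_nat_sum)
    also have "\<dots> \<le> real (card T)" using swapC by simp
    finally show ?thesis using dd0 by (simp add: mult_left_mono)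
  qed
  have "(\<Sum>p\<in>P. real (card (G p))) \<le> (\<Sum>p\<in>P. real (card (Iso (G p))) + real (card (C1 p)) + real (card (C2 p)) + real (card (C3 p)))"
  proof (rule sum_mono)
    fix p assume "p \<in> P"
    have "real (card (G p)) \<le> real (card (Iso (G p)) + card (C1 p) + card (C2 p) + card (C3 p))"
      using stepa[of p] by (simp only: of_nat_le_iff)
    thus "real (card (G p)) \<le> real (card (Iso (G p))) + real (card (C1 p)) + real (card (C2 p)) + real (card (C3 p))"
      by simp
  qed
  also have "\<dots> = (\<Sum>p\<in>P. real (card (Iso (G p)))) + (\<Sum>p\<in>P. real (card (C1 p))) + (\<Sum>p\<in>P. real (card (C2 p))) + (\<Sum>p\<in>P. real (card (C3 p)))"
    by (simp add: sum.distrib)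
  finally have SGup: "(\<Sum>p\<in>P. real (card (G p))) \<le> (\<Sum>p\<in>P. real (card (Iso (G p)))) + (\<Sum>p\<in>P. real (card (C1 p))) + (\<Sum>p\<in>P. real (card (C2 p))) + (\<Sum>p\<in>P. real (card (C3 p)))" .
  define TT where "TT = real L * real L * real (card T)"
  have TT0: "0 \<le> TT" unfolding TT_def by simp
  have "3 * (real L ^ 3 * (dd * real (card T))) = TT * (3 * real L * dd)"
    unfolding TT_def by (simp add: power3_eq_cube algebra_simps)
  also have "\<dots> \<le> TT * ((real_of_int n - 1) / 2)" using small TT0 by (intro mult_left_mono) auto
  finally have c3: "3 * (real L ^ 3 * (dd * real (card T))) \<le> TT * ((real_of_int n - 1) / 2)" .
  have SI: "(real_of_int n - 1) * TT / 2 \<le> (\<Sum>p\<in>P. real (card (Iso (G p))))"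
    using SGlow SGup S1 S2 S3 c3 unfolding TT_def by (simp add: algebra_simps)
  have "P \<noteq> {}" unfolding P_def using n2 by auto
  then obtain p where pP: "p \<in> P" and pa: "(\<Sum>q\<in>P. real (card (Iso (G q)))) \<le> real (card P) * real (card (Iso (G p)))"
    using avg_exists[OF finP, of "\<lambda>q. real (card (Iso (G q)))"] by blast
  have "card P = nat (n - 1) * (nat n * nat n)" unfolding P_def by (simp add: card_cartesian_product)
  hence cP: "real (card P) = (real_of_int n - 1) * (real_of_int n)^2" using n2 by (simp add: power2_eq_square)
  have "(real_of_int n - 1) * TT \<le> (real_of_int n - 1) * (2 * (real_of_int n)^2 * real (card (Iso (G p))))"
    using SI pa cP by (simp add: algebra_simps)
  hence "TT \<le> 2 * (real_of_int n)^2 * real (card (Iso (G p)))"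
    using n2 by (subst (asm) mult_le_cancel_left_pos) auto
  hence "real L ^ 2 * real (card T) \<le> 2 * (real_of_int n)^2 * real (card (Iso (Gs n A B C L p)))"
    unfolding TT_def G_def by (simp add: power2_eq_square)
  thus ?thesis unfolding T_def Ba_def by blast
qed


lemma core:
  fixes f :: "real \<Rightarrow> real" and N :: nat and A B C :: "int set" and d1 d2 :: real
  assumes mb: "matching_bound_fun f" and pr: "prime N"
    and sA: "A \<subseteq> {0..<int N}" and sB: "B \<subseteq> {0..<int N}" and sC: "C \<subseteq> {0..<int N}"
    and d1: "0 < d1" and d12: "d1 \<le> d2"
    and hA: "degree_bounds N d1 d2 A B C" and hB: "degree_bounds N d1 d2 B A C" and hC: "degree_bounds N d1 d2 C A B"
  shows "real (card A) \<le> 392 * (d2/d1) * f (1/d2) * real N"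
proof -
  have fpos: "\<And>x. 0 < x \<Longrightarrow> 0 < f x" using mb unfolding matching_bound_fun_def by blast
  have mbound: "\<And>M m x y z. 1 \<le> M \<Longrightarrow> additive_matching M m x y z \<Longrightarrow> real m \<le> f (real M) * real M"
    using mb unfolding matching_bound_fun_def by blast
  have fdec: "\<And>a b. 0 < a \<Longrightarrow> a \<le> b \<Longrightarrow> f b \<le> f a" using mb unfolding matching_bound_fun_def by blast
  have finc: "\<And>a b. 0 < a \<Longrightarrow> a < b \<Longrightarrow> a * f a < b * f b" using mb unfolding matching_bound_fun_def by blast
  have d2: "0 < d2" using d1 d12 by linarith
  define F where "F = f (1/d2)"
  have F0: "0 < F" unfolding F_def using fpos d2 by simp
  have D1: "1 \<le> d2 / d1" using d1 d12 by simp
  show ?thesis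
  proof (cases "A = {}")
    case True
    have "0 \<le> 392 * (d2/d1) * F * real N"
      using D1 F0 by (intro mult_nonneg_nonneg) auto
    thus ?thesis using True F_def by simp
  next
    case False
    then obtain a where aA: "a \<in> A" by blast
    have da: "d1 * real N \<le> real (card {b\<in>B. (- a - b) mod int N \<in> C})"
      "real (card {b\<in>B. (- a - b) mod int N \<in> C}) \<le> d2 * real N"
      using hA aA unfolding degree_bounds_def by auto
    have Npos: "0 < real N" using pr prime_gt_0_nat by simp
    have "0 < real (card {b\<in>B. (- a - b) mod int N \<in> C})" using da(1) d1 Npos
      by (smt (verit) mult_pos_pos)
    hence "1 \<le> real (card {b\<in>B. (- a - b) mod int N \<in> C})" by simp
    hence d2N: "1 \<le> d2 * real N" using da(2) by linarith
    have cardA: "real (card A) \<le> real N"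
    proof -
      have "card A \<le> card {0..<int N}" using sA by (intro card_mono) auto
      thus ?thesis by simp
    qed
    show ?thesis
    proof (cases "1/14 < d2")
      case True
      have "additive_matching 14 1 (\<lambda>_. 0) (\<lambda>_. 0) (\<lambda>_. 0)"
        unfolding additive_matching_def by simp
      hence "real 1 \<le> f (real 14) * real 14" by (rule mbound[of 14 1, rotated]) simp
      hence f14: "1/14 \<le> f 14" by simp
      have "1/d2 < 14" using True d2 by (simp add: field_simps)
      hence "f 14 \<le> F" unfolding F_def using fdec[of "1/d2" 14] d2 by simp
      hence "1 \<le> 14 * F" using f14 by linarith
      hence "real N \<le> 14 * F * real N" using Npos by simp
      also have "\<dots> \<le> 392 * (d2/d1) * F * real N"
        using D1 F0 Npos by (intro mult_right_mono) auto
      finally have "real N \<le> 392 * (d2/d1) * F * real N" .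
      thus ?thesis using cardA unfolding F_def by linarith
    next
      case False
      hence d2s: "d2 \<le> 1/14" by simp
      define x where "x = 1 / (7 * d2)"
      have x2: "2 \<le> x" unfolding x_def using d2s d2 by (simp add: field_simps)
      define L where "L = nat \<lfloor>x\<rfloor>"
      have Lx: "real L \<le> x" "x - 1 < real L" unfolding L_def using x2 by linarith+
      have L14: "1 / (14 * d2) \<le> real L" using Lx x2 unfolding x_def by (simp add: field_simps)
      have N14: "14 \<le> real N"
      proof -
        have "1/d2 \<le> real N" using d2N d2 by (simp add: field_simps)
        moreover have "14 \<le> 1/d2" using d2s d2 by (simp add: field_simps)
        ultimately show ?thesis by linarith
      qed
      have LN: "int L < int N"
      proof -
        have "real L * 7 * d2 \<le> 1" using Lx(1) d2 unfolding x_def by (simp add: field_simps)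
        moreover have "real L * 7 * d2 = d2 * (real L * 7)" by simp
        ultimately have "d2 * (real L * 7) \<le> d2 * real N" using d2N by linarith
        hence "real L * 7 \<le> real N" using d2 by simp
        hence "real L < real N" using Npos by linarith
        thus ?thesis by simp
      qed
      have small: "6 * real L * (d2 * real N) \<le> real_of_int (int N) - 1"
      proof -
        have "real L * d2 \<le> 1/7" using Lx(1) d2 unfolding x_def by (simp add: field_simps)
        hence c: "(6 * (real L * d2)) * real N \<le> (6 * (1/7)) * real N"
          using Npos by (intro mult_right_mono) linarith+
        have eq: "6 * real L * (d2 * real N) = (6 * (real L * d2)) * real N" by simp
        have "6 * real L * (d2 * real N) \<le> (6 * (1/7)) * real N" by (subst eq) (rule c)
        thus ?thesis using N14 by linarith
      qed
      have dA: "\<forall>a\<in>A. real (card {b\<in>B. (- a - b) mod int N \<in> C}) \<le> d2 * real N"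
        using hA unfolding degree_bounds_def by auto
      have dB: "\<forall>b\<in>B. real (card {a\<in>A. (- b - a) mod int N \<in> C}) \<le> d2 * real N"
        using hB unfolding degree_bounds_def by auto
      have dC: "\<forall>c\<in>C. real (card {a\<in>A. (- c - a) mod int N \<in> B}) \<le> d2 * real N"
        using hC unfolding degree_bounds_def by auto
      obtain p where p: "real L ^ 2 * real (card (SIGMA a:A. {b\<in>B. (- a - b) mod int N \<in> C}))
            \<le> 2 * (real_of_int (int N))^2 * real (card (Iso (Gs (int N) A B C L p)))"
        using counting[of "int N" A B C L "d2 * real N"] pr sA sB sC LN d2 Npos dA dB dC small
        by (auto intro: mult_nonneg_nonneg)
      define m where "m = card (Iso (Gs (int N) A B C L p))"
      have "\<exists>x y z. additive_matching (2*L) m x y z" unfolding m_def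
      proof (rule iso_matching)
        show "Gs (int N) A B C L p \<subseteq> {0..<int L} \<times> {0..<int L}" unfolding Gs_def by auto
      next
        fix i j i' j' i'' j''
        assume "(i,j) \<in> Gs (int N) A B C L p" "(i',j') \<in> Gs (int N) A B C L p" "(i'',j'') \<in> Gs (int N) A B C L p"
          and e: "i + j' = i'' + j''"
        thus "(i,j') \<in> Gs (int N) A B C L p" unfolding Gs_def by (simp add: e)
      qed
      then obtain xx yy zz where "additive_matching (2*L) m xx yy zz" by blast
      hence mb2: "real m \<le> f (real (2*L)) * real (2*L)" using mbound[of "2*L"] Lx x2 by simp
      have Lpos: "0 < real L" using Lx x2 by linarith
      have "2 * real L < 1/d2" using Lx(1) d2 unfolding x_def by (simp add: field_simps)
      hence "(2 * real L) * f (2 * real L) < (1/d2) * F" unfolding F_def using finc[of "2 * real L" "1/d2"] Lpos by simp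
      hence mF: "real m < F / d2" using mb2 by (simp add: mult.commute)
      define T where "T = (SIGMA a:A. {b\<in>B. (- a - b) mod int N \<in> C})"
      have finA: "finite A" using sA finite_subset by blast
      have finB: "finite B" using sB finite_subset by blast
      have "real (card T) = (\<Sum>a\<in>A. real (card {b\<in>B. (- a - b) mod int N \<in> C}))"
        unfolding T_def using finA finB by (simp add: card_SigmaI of_nat_sum)
      also have "\<dots> \<ge> (\<Sum>a\<in>A. d1 * real N)"
        using hA unfolding degree_bounds_def by (intro sum_mono) auto
      finally have cT: "real (card A) * (d1 * real N) \<le> real (card T)" by simp
      have step1: "real L ^ 2 * (real (card A) * (d1 * real N)) \<le> 2 * (real N)^2 * (F / d2)"
      proof -
        have "real L ^ 2 * (real (card A) * (d1 * real N)) \<le> real L ^ 2 * real (card T)"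
          using cT by (intro mult_left_mono) auto
        also have "\<dots> \<le> 2 * (real N)^2 * real m" using p unfolding T_def m_def by simp
        also have "\<dots> \<le> 2 * (real N)^2 * (F / d2)" using mF by (intro mult_left_mono) auto
        finally show ?thesis .
      qed
      have L2: "1 / (196 * d2^2) \<le> real L ^ 2"
      proof -
        have "(1 / (14 * d2))^2 \<le> real L ^ 2" using L14 d2 by (intro power_mono) auto
        thus ?thesis by (simp add: power2_eq_square field_simps)
      qed
      have cA0: "0 \<le> real (card A) * (d1 * real N)" using d1 Npos by simp
      have "(1 / (196 * d2^2)) * (real (card A) * (d1 * real N)) \<le> 2 * (real N)^2 * (F / d2)"
        using mult_right_mono[OF L2 cA0] step1 by linarith
      hence "real (card A) * (d1 * real N) \<le> 392 * d2 * (real N)^2 * F"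
        using d2 by (simp add: field_simps power2_eq_square)
      hence "(real (card A) * d1) * real N \<le> (392 * d2 * real N * F) * real N"
        by (simp add: power2_eq_square algebra_simps)
      hence "real (card A) * d1 \<le> 392 * d2 * real N * F" by (rule mult_right_le_imp_le[OF _ Npos])
      hence "real (card A) \<le> 392 * d2 * real N * F / d1" using d1 by (simp add: field_simps)
      thus ?thesis unfolding F_def by (simp add: field_simps)
    qed
  qed
qed


theorem lemma2p1:
  shows "\<exists>K::real. \<forall>f N X Y Z \<delta>1 \<delta>2.
    matching_bound_fun f \<longrightarrow> prime (N::nat) \<longrightarrow>
    X \<subseteq> {0..<int N} \<longrightarrow> Y \<subseteq> {0..<int N} \<longrightarrow> Z \<subseteq> {0..<int N} \<longrightarrow>
    0 < \<delta>1 \<longrightarrow> \<delta>1 \<le> \<delta>2 \<longrightarrow>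
    degree_bounds N \<delta>1 \<delta>2 X Y Z \<longrightarrow> degree_bounds N \<delta>1 \<delta>2 X Z Y \<longrightarrow>
    degree_bounds N \<delta>1 \<delta>2 Y X Z \<longrightarrow> degree_bounds N \<delta>1 \<delta>2 Y Z X \<longrightarrow>
    degree_bounds N \<delta>1 \<delta>2 Z X Y \<longrightarrow> degree_bounds N \<delta>1 \<delta>2 Z Y X \<longrightarrow>
    real (card X) \<le> K * (\<delta>2 / \<delta>1) * f (1 / \<delta>2) * real N \<and>
    real (card Y) \<le> K * (\<delta>2 / \<delta>1) * f (1 / \<delta>2) * real N \<and>
    real (card Z) \<le> K * (\<delta>2 / \<delta>1) * f (1 / \<delta>2) * real N"
proof (rule exI[of _ 392], intro allI impI)
  fix f N X Y Z and d1 d2 :: real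
  assume mb: "matching_bound_fun f" and pr: "prime (N::nat)"
    and sX: "X \<subseteq> {0..<int N}" and sY: "Y \<subseteq> {0..<int N}" and sZ: "Z \<subseteq> {0..<int N}"
    and d1: "0 < d1" and d12: "d1 \<le> d2"
    and bXYZ: "degree_bounds N d1 d2 X Y Z" and bXZY: "degree_bounds N d1 d2 X Z Y"
    and bYXZ: "degree_bounds N d1 d2 Y X Z" and bYZX: "degree_bounds N d1 d2 Y Z X"
    and bZXY: "degree_bounds N d1 d2 Z X Y" and bZYX: "degree_bounds N d1 d2 Z Y X"
  have 1: "real (card X) \<le> 392 * (d2/d1) * f (1/d2) * real N"
    by (rule core[OF mb pr sX sY sZ d1 d12 bXYZ bYXZ bZXY])
  have 2: "real (card Y) \<le> 392 * (d2/d1) * f (1/d2) * real N"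
    by (rule core[OF mb pr sY sX sZ d1 d12 bYXZ bXYZ bZYX])
  have 3: "real (card Z) \<le> 392 * (d2/d1) * f (1/d2) * real N"
    by (rule core[OF mb pr sZ sX sY d1 d12 bZXY bXZY bYZX])
  show "real (card X) \<le> 392 * (d2 / d1) * f (1 / d2) * real N \<and>
    real (card Y) \<le> 392 * (d2 / d1) * f (1 / d2) * real N \<and>
    real (card Z) \<le> 392 * (d2 / d1) * f (1 / d2) * real N" using 1 2 3 by blast
qed

end
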